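(* For every $\epsilon\in[0,1]$ and every unweighted congestion game $\mathcal{G}$ with affine latency functions, $\epsilon\text{-PoS}(\mathcal{G})\le\frac{1+\sqrt{3}}{\epsilon+\sqrt{3}}$.
   Context: A weighted congestion game consists of a finite set $[n]=\{1,\dots,n\}$ of players, a finite set $E$ of resources, for each player $i$ a weight $w_i>0$ and a nonempty finite strategy set $\Sigma_i\subseteq 2^E$, and for each resource $e$ a latency function $\ell_e:\mathbb{R}_{\ge 0}\to\mathbb{R}_{\ge 0}$. It is unweighted if $w_i=1$ for all $i$. Affine latency functions means $\ell_e(x)=\alpha_e x+\beta_e$ with $\alpha_e,\beta_e\ge 0$. For a strategy profile $S=(s_1,\dots,s_n)\in\prod_i\Sigma_i$, the congestion of $e$ is $L_e(S)=\sum_{i:\,e\in s_i}w_i$, the cost of player $i$ is $c_i(S)=\sum_{e\in s_i}\ell_e(L_e(S))$, and the social cost is $\mathrm{SUM}(S)=\sum_{i\in[n]}c_i(S)$; $S^*$ denotes a profile minimizing $\mathrm{SUM}$. For $t\in\Sigma_i$, $(S_{-i}\diamond t)$ denotes the profile obtained from $S$ by replacing $s_i$ with $t$. For $\epsilon\ge 0$, $S$ is an $\epsilon$-approximate pure Nash equilibrium ($\epsilon$-PNE) if $c_i(S)\le(1+\epsilon)c_i(S_{-i}\diamond t)$ for all $i\in[n]$ and all $t\in\Sigma_i$. The $\epsilon$-approximate price of stability is $\epsilon\text{-PoS}(\mathcal{G})=\min_{S\ \epsilon\text{-PNE}}\mathrm{SUM}(S)/\mathrm{SUM}(S^* )$.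 *)

theory Defs
  imports Complex_Main
begin

text \<open>Congestion games with players 0..n-1, resources of type 'e.
  A strategy profile is a function S :: nat => 'e set (values at i >= n are irrelevant).\<close>

definition is_profile :: "nat \<Rightarrow> (nat \<Rightarrow> 'e set set) \<Rightarrow> (nat \<Rightarrow> 'e set) \<Rightarrow> bool" where
  "is_profile n Sig S \<longleftrightarrow> (\<forall>i<n. S i \<in> Sig i)"

definition congestion :: "nat \<Rightarrow> (nat \<Rightarrow> real) \<Rightarrow> (nat \<Rightarrow> 'e set) \<Rightarrow> 'e \<Rightarrow> real" where
  "congestion n w S e = (\<Sum>i\<in>{i. i < n \<and> e \<in> S i}. w i)"

definition player_cost :: "nat \<Rightarrow> (nat \<Rightarrow> real) \<Rightarrow> ('e \<Rightarrow> real \<Rightarrow> real) \<Rightarrow> (nat \<Rightarrow> 'e set) \<Rightarrow> nat \<Rightarrow> real" where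
  "player_cost n w lat S i = (\<Sum>e\<in>S i. lat e (congestion n w S e))"

definition social_cost :: "nat \<Rightarrow> (nat \<Rightarrow> real) \<Rightarrow> ('e \<Rightarrow> real \<Rightarrow> real) \<Rightarrow> (nat \<Rightarrow> 'e set) \<Rightarrow> real" where
  "social_cost n w lat S = (\<Sum>i<n. player_cost n w lat S i)"

text \<open>epsilon-approximate pure Nash equilibrium; (S_{-i} <> t) is S(i := t).\<close>
definition is_eps_PNE :: "real \<Rightarrow> nat \<Rightarrow> (nat \<Rightarrow> real) \<Rightarrow> (nat \<Rightarrow> 'e set set) \<Rightarrow> ('e \<Rightarrow> real \<Rightarrow> real) \<Rightarrow> (nat \<Rightarrow> 'e set) \<Rightarrow> bool" where
  "is_eps_PNE eps n w Sig lat S \<longleftrightarrow> is_profile n Sig S \<and>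
     (\<forall>i<n. \<forall>t\<in>Sig i. player_cost n w lat S i \<le> (1 + eps) * player_cost n w lat (S(i := t)) i)"

definition congestion_game :: "nat \<Rightarrow> 'e set \<Rightarrow> (nat \<Rightarrow> real) \<Rightarrow> (nat \<Rightarrow> 'e set set) \<Rightarrow> bool" where
  "congestion_game n E w Sig \<longleftrightarrow> finite E \<and>
     (\<forall>i<n. w i > 0 \<and> Sig i \<noteq> {} \<and> finite (Sig i) \<and> (\<forall>s\<in>Sig i. s \<subseteq> E))"


end

theory Submission
  imports Defs "HOL-Library.FuncSet"
begin

lemma H_nonneg:
  fixes N m :: nat
  defines "s \<equiv> sqrt 3"
  shows "0 \<le> (2-s)*real N^2 - 2*real N*real m + (2+s)*real m^2 - (2+s)*real m + s*real N"
proof -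
  have s2: "s^2 = 3" unfolding s_def by simp
  have s0: "s > 1.7" unfolding s_def by (rule real_less_rsqrt) (simp add: power2_eq_square)
  have s1: "s < 2" unfolding s_def by (rule real_less_lsqrt) (simp_all add: power2_eq_square) 
  consider "m = 0" | "m = 1" | "m \<ge> 2" by linarith
  then show ?thesis
  proof cases
    case 1 then show ?thesis using s1 s0 by (simp add: power2_eq_square)
  next
    case 2
    have "(2-s)*real N^2 - 2*real N*real m + (2+s)*real m^2 - (2+s)*real m + s*real N
        = (2-s)*(real N*(real N - 1))" using 2 by (simp add: power2_eq_square algebra_simps)
    moreover have "real N*(real N - 1) \<ge> 0" by (cases N) auto
    ultimately show ?thesis using s1 by simp
  next
    case 3
    define x where "x = real N - (2+s)*real m"
    have eq0: "(2-s)*real N^2 - 2*real N*real m + (2+s)*real m^2 - (2+s)*real m + s*real N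
       = (2-s)*x^2 + s*x + (s+1)*real m + (s^2-3)*(-2*real N*real m + (2+s)*real m^2 + real m)"
      unfolding x_def by (simp add: power2_eq_square algebra_simps)
    have eq: "4*(2-s)*((2-s)*real N^2 - 2*real N*real m + (2+s)*real m^2 - (2+s)*real m + s*real N)
       = (2*(2-s)*x + s)^2 + 4*(2-s)*(s+1)*real m - s^2"
      using s2 unfolding eq0 by (simp add: power2_eq_square algebra_simps)
    have "4*(2-s)*(s+1)*real m \<ge> 4*(2-s)*(s+1)*2" using 3 s1 s0 by (intro mult_left_mono) auto
    moreover have "4*(2-s)*(s+1)*2 \<ge> s^2" using s2 s0 s1 
      by (simp add: power2_eq_square algebra_simps)
    ultimately have "4*(2-s)*((2-s)*real N^2 - 2*real N*real m + (2+s)*real m^2 - (2+s)*real m + s*real N) \<ge> 0"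
      unfolding eq by (smt (verit) zero_le_power2)
    then show ?thesis using s1 by (simp add: zero_le_mult_iff)
  qed
qed
lemma core_ident:
  fixes N m a bt eps s :: real
  assumes "eps + s > 0" "1 + eps > 0"
  shows "(((1+s)/(eps+s) - (1-eps)/((1+eps)*(eps+s)))*((a*((1+eps)/2*N^2+(1-eps)/2*N)+bt*N) - (a*((1+eps)/2*m^2+(1-eps)/2*m)+bt*m))
     + (1-eps)/((1+eps)*(eps+s))*(N*(a*((1+eps)/2*(2*N-1)+(1-eps)/2)+bt) - m*(a*((1+eps)/2*(2*N+1)+(1-eps)/2)+bt)))
     - (N*(a*N+bt) - (1+s)/(eps+s)*(m*(a*m+bt)))
   = a*(1-eps)/(2*(eps+s)) * ((2-s)*N^2 - 2*N*m + (2+s)*m^2 - (2+s)*m + s*N) + bt*N*((1+s)/(eps+s) - 1)"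
proof -
  have h1: "eps + s \<noteq> 0" "1 + eps \<noteq> 0" using assms by auto
  show ?thesis
    apply (simp only: diff_divide_distrib[symmetric] add_divide_distrib[symmetric] times_divide_eq_left times_divide_eq_right)
    using h1 apply (simp add: divide_simps)
    apply (simp add: power2_eq_square algebra_simps)
    done
qed


lemma core:
  fixes N m :: nat and a bt eps :: real
  assumes e0: "0 \<le> eps" and e1: "eps \<le> 1" and a0: "0 \<le> a" and b0: "0 \<le> bt"
  shows "real N*(a*real N+bt) - (1+sqrt 3)/(eps+sqrt 3)*(real m*(a*real m+bt))
     \<le> ((1+sqrt 3)/(eps+sqrt 3) - (1-eps)/((1+eps)*(eps+sqrt 3)))*((a*((1+eps)/2*real N^2+(1-eps)/2*real N)+bt*real N) - (a*((1+eps)/2*real m^2+(1-eps)/2*real m)+bt*real m))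
     + (1-eps)/((1+eps)*(eps+sqrt 3))*(real N*(a*((1+eps)/2*(2*real N-1)+(1-eps)/2)+bt) - real m*(a*((1+eps)/2*(2*real N+1)+(1-eps)/2)+bt))"
proof -
  define s where "s = sqrt 3"
  have s0: "s > 1" unfolding s_def by simp
  have pos: "eps + s > 0" "1 + eps > 0" using s0 e0 by auto
  note id = core_ident[OF pos, of a "real N" bt "real m"]
  have H: "0 \<le> (2-s)*real N^2 - 2*real N*real m + (2+s)*real m^2 - (2+s)*real m + s*real N"
    unfolding s_def by (rule H_nonneg)
  have r1: "(1+s)/(eps+s) \<ge> 1" using pos e1 by (simp add: field_simps)
  have t1: "0 \<le> a*(1-eps)/(2*(eps+s)) * ((2-s)*real N^2 - 2*real N*real m + (2+s)*real m^2 - (2+s)*real m + s*real N)"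
    using H a0 e1 pos by (intro mult_nonneg_nonneg divide_nonneg_pos) auto
  have t2: "0 \<le> bt*real N*((1+s)/(eps+s) - 1)" using b0 r1 by simp
  have aux: "\<And>A B C D::real. A - B = C + D \<Longrightarrow> 0 \<le> C \<Longrightarrow> 0 \<le> D \<Longrightarrow> B \<le> A" by linarith
  show ?thesis using aux[OF id t1 t2] unfolding s_def .
qed

lemma pw1:
  fixes M a b eps K K' :: real and x y :: bool
  assumes "0 \<le> M" "0\<le>a" "0\<le>b" "0\<le>eps"
    and K': "K' = M + (if y then 1 else 0)" and K: "K = M + (if x then 1 else 0)"
  shows "(a*((1+eps)/2*K'^2 + (1-eps)/2*K') + b*K') - (a*((1+eps)/2*K^2 + (1-eps)/2*K) + b*K)
     \<le> (1+eps)*(if y then a*K'+b else 0) - (if x then a*K+b else 0)"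
proof -
  have h1: "0 \<le> eps*(a*M)" "0 \<le> eps*a" "0 \<le> eps*b" using assms by auto
  consider "x" "y" | "x" "\<not>y" | "\<not>x" "y" | "\<not>x" "\<not>y" by blast
  then show ?thesis
  proof cases
    case 1
    then have "K' = K" using K K' by simp
    have "0 \<le> eps*(a*K+b)" using assms K by (intro mult_nonneg_nonneg add_nonneg_nonneg) auto
    moreover have "(1+eps)*(a*K+b) - (a*K+b) = eps*(a*K+b)" by (simp add: algebra_simps)
    ultimately show ?thesis using 1 `K' = K` by simp
  next
    case 2
    have "(a*((1+eps)/2*K'^2 + (1-eps)/2*K') + b*K') - (a*((1+eps)/2*K^2 + (1-eps)/2*K) + b*K)
        = ((1+eps)*(if y then a*K'+b else 0) - (if x then a*K+b else 0)) - eps*(a*M)"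
      using 2 unfolding K K' by (simp add: field_simps power2_eq_square)
    then show ?thesis using h1 by linarith
  next
    case 3
    have "(a*((1+eps)/2*K'^2 + (1-eps)/2*K') + b*K') - (a*((1+eps)/2*K^2 + (1-eps)/2*K) + b*K)
        = ((1+eps)*(if y then a*K'+b else 0) - (if x then a*K+b else 0)) - eps*a - eps*b"
      using 3 unfolding K K' by (simp add: field_simps power2_eq_square)
    then show ?thesis using h1 by linarith
  next
    case 4
    then show ?thesis using K K' by simp
  qed
qed

lemma pw2:
  fixes M a b eps K K' :: real and x y :: bool
  assumes "0 \<le> M" "0\<le>a" "0\<le>b" "0\<le>eps"
    and K': "K' = M + (if y then 1 else 0)" and K: "K = M + (if x then 1 else 0)"
  shows "(a*((1+eps)/2*K'^2 + (1-eps)/2*K') + b*K') - (a*((1+eps)/2*K^2 + (1-eps)/2*K) + b*K)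
     \<le> (if y then a*((1+eps)/2*(2*K+1)+(1-eps)/2)+b else 0) - (if x then a*((1+eps)/2*(2*K-1)+(1-eps)/2)+b else 0)"
proof -
  have h1: "0 \<le> eps*a" using assms by auto
  consider "x" "y" | "x" "\<not>y" | "\<not>x" "y" | "\<not>x" "\<not>y" by blast
  then show ?thesis
  proof cases
    case 1
    then have "K' = K" using K K' by simp
    have "(if y then a*((1+eps)/2*(2*K+1)+(1-eps)/2)+b else 0) - (if x then a*((1+eps)/2*(2*K-1)+(1-eps)/2)+b else 0)
       = a + eps*a" using 1 by (simp add: field_simps)
    then show ?thesis using `K' = K` h1 assms(2) by simp
  next
    case 2
    have "(a*((1+eps)/2*K'^2 + (1-eps)/2*K') + b*K') - (a*((1+eps)/2*K^2 + (1-eps)/2*K) + b*K)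
        = (if y then a*((1+eps)/2*(2*K+1)+(1-eps)/2)+b else 0) - (if x then a*((1+eps)/2*(2*K-1)+(1-eps)/2)+b else 0)"
      using 2 unfolding K K' by (simp add: field_simps power2_eq_square)
    then show ?thesis by linarith
  next
    case 3
    have "(a*((1+eps)/2*K'^2 + (1-eps)/2*K') + b*K') - (a*((1+eps)/2*K^2 + (1-eps)/2*K) + b*K)
        = (if y then a*((1+eps)/2*(2*K+1)+(1-eps)/2)+b else 0) - (if x then a*((1+eps)/2*(2*K-1)+(1-eps)/2)+b else 0)"
      using 3 unfolding K K' by (simp add: field_simps power2_eq_square)
    then show ?thesis by linarith
  next
    case 4
    then show ?thesis using K K' by simp
  qed
qed

lemma sum_sub:
  assumes "finite E" "A \<subseteq> E"
  shows "(\<Sum>e\<in>A. g e) = (\<Sum>e\<in>E. if e \<in> A then g e else (0::real))"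
proof -
  have "A = E \<inter> A" using assms by auto
  then show ?thesis using sum.inter_restrict[OF assms(1), of g A] by simp
qed

lemma sum_count:
  fixes n :: nat and S :: "nat \<Rightarrow> 'e set" and f :: "'e \<Rightarrow> real"
  assumes "finite E"
  shows "(\<Sum>i<n. \<Sum>e\<in>E. if e \<in> S i then f e else (0::real)) = (\<Sum>e\<in>E. real (card {i. i<n \<and> e\<in>S i}) * f e)"
proof -
  have "(\<Sum>i<n. \<Sum>e\<in>E. if e \<in> S i then f e else (0::real)) = (\<Sum>e\<in>E. \<Sum>i<n. if e \<in> S i then f e else 0)"
    by (rule sum.swap)
  also have "\<dots> = (\<Sum>e\<in>E. real (card {i. i<n \<and> e\<in>S i}) * f e)"
  proof (rule sum.cong)
    fix e assume "e \<in> E"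
    have st: "{..<n} \<inter> {i. e \<in> S i} = {i. i<n \<and> e\<in>S i}" by auto
    have "(\<Sum>i<n. if e \<in> S i then f e else 0) = (\<Sum>i\<in>{..<n} \<inter> {i. e \<in> S i}. f e)"
      using sum.inter_restrict[OF finite_lessThan, of "\<lambda>i. f e" n "{i. e \<in> S i}"] by simp
    then show "(\<Sum>i<n. if e \<in> S i then f e else 0) = real (card {i. i<n \<and> e\<in>S i}) * f e" unfolding st by simp
  qed simp
  finally show ?thesis .
qed

lemma card_split:
  fixes n :: nat and S :: "nat \<Rightarrow> 'e set"
  assumes "i < n"
  shows "real (card {j. j<n \<and> e\<in>S j}) = real (card {j. j<n \<and> j\<noteq>i \<and> e\<in>S j}) + (if e\<in>S i then 1 else 0)"
proof (cases "e \<in> S i")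
  case True
  then have "{j. j<n \<and> e\<in>S j} = insert i {j. j<n \<and> j\<noteq>i \<and> e\<in>S j}" using assms by auto
  moreover have "finite {j. j<n \<and> j\<noteq>i \<and> e\<in>S j}" using finite_subset[of "{j. j<n \<and> j\<noteq>i \<and> e\<in>S j}" "{..<n}"] by auto
  ultimately show ?thesis using True by simp
next
  case False
  then have "{j. j<n \<and> e\<in>S j} = {j. j<n \<and> j\<noteq>i \<and> e\<in>S j}" by auto
  then show ?thesis using False by simp
qed


theorem mainTheorem4:
  fixes n :: nat and E :: "'e set" and Sig :: "nat \<Rightarrow> 'e set set"
    and \<alpha> \<beta> :: "'e \<Rightarrow> real" and eps :: real
  assumes eps: "0 \<le> eps" "eps \<le> 1"
    and game: "congestion_game n E (\<lambda>_. 1) Sig"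
    and aff: "\<forall>e\<in>E. 0 \<le> \<alpha> e \<and> 0 \<le> \<beta> e"
  shows "\<exists>S. is_eps_PNE eps n (\<lambda>_. 1) Sig (\<lambda>e x. \<alpha> e * x + \<beta> e) S \<and>
           (\<forall>S'. is_profile n Sig S' \<longrightarrow>
              social_cost n (\<lambda>_. 1) (\<lambda>e x. \<alpha> e * x + \<beta> e) S
                \<le> (1 + sqrt 3) / (eps + sqrt 3) * social_cost n (\<lambda>_. 1) (\<lambda>e x. \<alpha> e * x + \<beta> e) S')"
proof -
  define phi where "phi = (\<lambda>e z. \<alpha> e*((1+eps)/2*z^2 + (1-eps)/2*z) + \<beta> e*z)"
  define K where "K = (\<lambda>(S::nat \<Rightarrow> 'e set) e. real (card {i. i<n \<and> e \<in> S i}))"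
  define G where "G = (\<lambda>S. \<Sum>e\<in>E. phi e (K S e))"
  define P where "P = Pi\<^sub>E {..<n} Sig"
  have finE: "finite E" and Sigs: "\<And>i. i<n \<Longrightarrow> Sig i \<noteq> {} \<and> finite (Sig i) \<and> (\<forall>s\<in>Sig i. s \<subseteq> E)"
    using game unfolding congestion_game_def by auto
  have congK: "\<And>S e. congestion n (\<lambda>_. 1) S e = K S e"
    by (simp add: congestion_def K_def)
  have pcE: "player_cost n (\<lambda>_. 1) (\<lambda>e x. \<alpha> e * x + \<beta> e) S i
      = (\<Sum>e\<in>E. if e\<in>S i then \<alpha> e * K S e + \<beta> e else 0)" if "S i \<subseteq> E" for S i
    unfolding player_cost_def congK using sum_sub[OF finE that] by simp
  have scE: "social_cost n (\<lambda>_. 1) (\<lambda>e x. \<alpha> e * x + \<beta> e) S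
      = (\<Sum>e\<in>E. K S e * (\<alpha> e * K S e + \<beta> e))" if "\<forall>i<n. S i \<subseteq> E" for S
  proof -
    have "social_cost n (\<lambda>_. 1) (\<lambda>e x. \<alpha> e * x + \<beta> e) S
        = (\<Sum>i<n. \<Sum>e\<in>E. if e\<in>S i then \<alpha> e * K S e + \<beta> e else 0)"
      unfolding social_cost_def using that pcE by (intro sum.cong) auto
    also have "\<dots> = (\<Sum>e\<in>E. K S e * (\<alpha> e * K S e + \<beta> e))"
      unfolding sum_count[OF finE] K_def by simp
    finally show ?thesis .
  qed
  have finP: "finite P" unfolding P_def using Sigs by (intro finite_PiE) auto
  have neP: "P \<noteq> {}" unfolding P_def using Sigs by (simp add: PiE_eq_empty_iff)
  obtain N where NP: "N \<in> P" and Nmin: "\<And>S. S \<in> P \<Longrightarrow> G N \<le> G S"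
  proof -
    have "Min (G ` P) \<in> G ` P" using finP neP by (intro Min_in) auto
    then obtain N where "N \<in> P" "G N = Min (G ` P)" by auto
    moreover have "\<And>S. S \<in> P \<Longrightarrow> Min (G ` P) \<le> G S" using finP by (intro Min_le) auto
    ultimately show ?thesis using that by metis
  qed
  have NSig: "\<forall>i<n. N i \<in> Sig i" using NP unfolding P_def by (auto simp: PiE_iff)
  have NE: "\<forall>i<n. N i \<subseteq> E" using NSig Sigs by blast
  have upd_in: "N(i := t) \<in> P" if "i < n" "t \<in> Sig i" for i t
    using NP that unfolding P_def by (auto simp: PiE_iff extensional_def)
  have Kupd: "K (N(i:=t)) e = real (card {j. j<n \<and> j\<noteq>i \<and> e\<in>N j}) + (if e\<in>t then 1 else 0)"
    if "i<n" for i t e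
  proof -
    have "{j. j<n \<and> j\<noteq>i \<and> e\<in>(N(i:=t)) j} = {j. j<n \<and> j\<noteq>i \<and> e\<in>N j}" by auto
    then show ?thesis using card_split[OF that, of e "N(i:=t)"] unfolding K_def by simp
  qed
  have KN: "K N e = real (card {j. j<n \<and> j\<noteq>i \<and> e\<in>N j}) + (if e\<in>N i then 1 else 0)"
    if "i<n" for i e
    using card_split[OF that, of e N] unfolding K_def by simp
  have Kupd_E: "\<forall>j<n. (N(i:=t)) j \<subseteq> E" if "i<n" "t \<in> Sig i" for i t
    using NE Sigs that by auto
  have PNE: "is_eps_PNE eps n (\<lambda>_. 1) Sig (\<lambda>e x. \<alpha> e * x + \<beta> e) N"
    unfolding is_eps_PNE_def is_profile_def
  proof (intro conjI allI impI ballI)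
    show "\<And>i. i < n \<Longrightarrow> N i \<in> Sig i" using NSig by blast
    fix i t assume i: "i < n" and t: "t \<in> Sig i"
    have tE: "t \<subseteq> E" using Sigs i t by blast
    have "G (N(i:=t)) - G N = (\<Sum>e\<in>E. phi e (K (N(i:=t)) e) - phi e (K N e))"
      unfolding G_def by (simp add: sum_subtractf)
    also have "\<dots> \<le> (\<Sum>e\<in>E. (1+eps)*(if e\<in>t then \<alpha> e * K (N(i:=t)) e + \<beta> e else 0)
                      - (if e\<in>N i then \<alpha> e * K N e + \<beta> e else 0))"
    proof (rule sum_mono)
      fix e assume e: "e \<in> E"
      show "phi e (K (N(i:=t)) e) - phi e (K N e) \<le> (1+eps)*(if e\<in>t then \<alpha> e * K (N(i:=t)) e + \<beta> e else 0)
                      - (if e\<in>N i then \<alpha> e * K N e + \<beta> e else 0)"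
        unfolding phi_def
        by (rule pw1[OF _ _ _ eps(1) Kupd[OF i] KN[OF i]]) (use aff e in auto)
    qed
    also have "\<dots> = (1+eps) * player_cost n (\<lambda>_. 1) (\<lambda>e x. \<alpha> e * x + \<beta> e) (N(i:=t)) i
                   - player_cost n (\<lambda>_. 1) (\<lambda>e x. \<alpha> e * x + \<beta> e) N i"
      using pcE[of "N(i:=t)" i] pcE[of N i] tE NE i
      by (simp add: sum_subtractf sum_distrib_left)
    finally have "G (N(i:=t)) - G N \<le> (1+eps) * player_cost n (\<lambda>_. 1) (\<lambda>e x. \<alpha> e * x + \<beta> e) (N(i:=t)) i
                   - player_cost n (\<lambda>_. 1) (\<lambda>e x. \<alpha> e * x + \<beta> e) N i" .
    moreover have "G N \<le> G (N(i:=t))" using Nmin upd_in[OF i t] by blast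
    ultimately show "player_cost n (\<lambda>_. 1) (\<lambda>e x. \<alpha> e * x + \<beta> e) N i
        \<le> (1 + eps) * player_cost n (\<lambda>_. 1) (\<lambda>e x. \<alpha> e * x + \<beta> e) (N(i := t)) i" by linarith
  qed
  have eff: "social_cost n (\<lambda>_. 1) (\<lambda>e x. \<alpha> e * x + \<beta> e) N
       \<le> (1 + sqrt 3) / (eps + sqrt 3) * social_cost n (\<lambda>_. 1) (\<lambda>e x. \<alpha> e * x + \<beta> e) Q"
    if prof: "is_profile n Sig Q" for Q
  proof -
    have QSig: "\<forall>i<n. Q i \<in> Sig i" using prof unfolding is_profile_def by blast
    have QE: "\<forall>i<n. Q i \<subseteq> E" using QSig Sigs by blast
    have Q'P: "restrict Q {..<n} \<in> P" using QSig unfolding P_def by auto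
    have KQ': "K (restrict Q {..<n}) = K Q" unfolding K_def
      by (intro ext) (simp add: restrict_def cong: conj_cong)
    have GNQ: "G N \<le> G Q" using Nmin[OF Q'P] unfolding G_def KQ' .
    define X where "X = (\<lambda>e. \<alpha> e*((1+eps)/2*(2*K N e+1)+(1-eps)/2)+\<beta> e)"
    define Y where "Y = (\<lambda>e. \<alpha> e*((1+eps)/2*(2*K N e-1)+(1-eps)/2)+\<beta> e)"
    have loc_i: "0 \<le> (\<Sum>e\<in>E. if e\<in>Q i then X e else 0) - (\<Sum>e\<in>E. if e\<in>N i then Y e else 0)"
      if i: "i<n" for i
    proof -
      have "0 \<le> G (N(i:=Q i)) - G N" using Nmin upd_in[OF i] QSig i by fastforce
      also have "G (N(i:=Q i)) - G N = (\<Sum>e\<in>E. phi e (K (N(i:=Q i)) e) - phi e (K N e))"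
        unfolding G_def by (simp add: sum_subtractf)
      also have "\<dots> \<le> (\<Sum>e\<in>E. (if e\<in>Q i then X e else 0) - (if e\<in>N i then Y e else 0))"
      proof (rule sum_mono)
        fix e assume e: "e \<in> E"
        show "phi e (K (N(i:=Q i)) e) - phi e (K N e) \<le> (if e\<in>Q i then X e else 0) - (if e\<in>N i then Y e else 0)"
          unfolding phi_def X_def Y_def
          by (rule pw2[OF _ _ _ eps(1) Kupd[OF i] KN[OF i]]) (use aff e in auto)
      qed
      finally show ?thesis by (simp add: sum_subtractf)
    qed
    have loc: "0 \<le> (\<Sum>e\<in>E. K Q e * X e) - (\<Sum>e\<in>E. K N e * Y e)"
    proof -
      have "0 \<le> (\<Sum>i<n. (\<Sum>e\<in>E. if e\<in>Q i then X e else 0) - (\<Sum>e\<in>E. if e\<in>N i then Y e else 0))"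
        using loc_i by (intro sum_nonneg) auto
      also have "\<dots> = (\<Sum>e\<in>E. K Q e * X e) - (\<Sum>e\<in>E. K N e * Y e)"
        by (simp add: sum_subtractf sum_count[OF finE] K_def)
      finally show ?thesis .
    qed
    define rho where "rho = (1 + sqrt 3) / (eps + sqrt 3)"
    define cc where "cc = (1-eps)/((1+eps)*(eps+sqrt 3))"
    define bb where "bb = rho - cc"
    have s1: "sqrt 3 > 1" by simp
    have pos3: "0 < eps + sqrt 3" using eps s1 by linarith
    have cc0: "0 \<le> cc" unfolding cc_def using eps pos3 by (intro divide_nonneg_pos mult_pos_pos) auto
    have bb0: "0 \<le> bb"
    proof -
      have "rho - 1 = (1-eps)/(eps+sqrt 3)" unfolding rho_def using pos3 by (simp add: field_simps)
      moreover have "cc \<le> (1-eps)/(eps+sqrt 3)" unfolding cc_def using eps pos3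
        by (simp add: divide_simps) (metis mult_left_mono mult.right_neutral le_add_same_cancel1 diff_ge_0_iff_ge)
      moreover have "(1-eps)/(eps+sqrt 3) \<le> rho" unfolding rho_def using eps pos3 by (simp add: divide_simps)
      ultimately show ?thesis unfolding bb_def by linarith
    qed
    have per_e: "K N e * (\<alpha> e * K N e + \<beta> e) - rho * (K Q e * (\<alpha> e * K Q e + \<beta> e))
        \<le> bb * (phi e (K N e) - phi e (K Q e)) + cc * (K N e * Y e - K Q e * X e)" if e: "e \<in> E" for e
      using core[OF eps, of "\<alpha> e" "\<beta> e" "card {i. i<n \<and> e \<in> N i}" "card {i. i<n \<and> e \<in> Q i}"] aff e
      unfolding rho_def cc_def bb_def phi_def X_def Y_def K_def by simp
    have "(\<Sum>e\<in>E. K N e * (\<alpha> e * K N e + \<beta> e) - rho * (K Q e * (\<alpha> e * K Q e + \<beta> e)))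
        \<le> (\<Sum>e\<in>E. bb * (phi e (K N e) - phi e (K Q e)) + cc * (K N e * Y e - K Q e * X e))"
      using per_e by (rule sum_mono)
    then have "(\<Sum>e\<in>E. K N e * (\<alpha> e * K N e + \<beta> e)) - rho * (\<Sum>e\<in>E. K Q e * (\<alpha> e * K Q e + \<beta> e))
        \<le> bb * (G N - G Q) + cc * ((\<Sum>e\<in>E. K N e * Y e) - (\<Sum>e\<in>E. K Q e * X e))"
      unfolding G_def by (simp add: sum_subtractf sum.distrib sum_distrib_left right_diff_distrib)
    moreover have "bb * (G N - G Q) \<le> 0" using bb0 GNQ by (simp add: mult_nonneg_nonpos)
    moreover have "cc * ((\<Sum>e\<in>E. K N e * Y e) - (\<Sum>e\<in>E. K Q e * X e)) \<le> 0"
      using cc0 loc by (simp add: mult_nonneg_nonpos)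
    ultimately show ?thesis unfolding scE[OF NE] scE[OF QE] rho_def[symmetric] by linarith
  qed
  show ?thesis using PNE eff by blast
qed

end
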